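(* Let $k$ be a field of prime characteristic $p$ and let $H_1=\{x_1^p\}^S$ be the $T$-space of $k_0\langle X\rangle$ generated by $x_1^p$. Then for any $u\in H_1$ and any $v\in k_0\langle X\rangle$, $[u,v]=uv-vu\in H_1$.
   Context: $X=\{x_1,x_2,\ldots\}$ is countably infinite; $k_0\langle X\rangle$ is the free associative (non-unital) $k$-algebra on $X$. A $T$-space is a $k$-subspace of $k_0\langle X\rangle$ invariant under every algebra endomorphism of $k_0\langle X\rangle$; $\{f\}^S$ is the $T$-space generated by $f$. *)

theory Defs
  imports Main "HOL-Computational_Algebra.Primes"
begin

text \<open>The free non-unital associative algebra k_0<X> on X = {x_0, x_1, ...} (indexed by nat;
  the paper's x_1 is our variable 0). An element is a finitely supported coefficient function
  on words (nat list), with zero coefficient at the empty word (no constant term).\<close>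

definition ncp :: "(nat list \<Rightarrow> 'k::field) set" where
  "ncp = {f. finite {w. f w \<noteq> 0} \<and> f [] = 0}"

definition nc_add :: "(nat list \<Rightarrow> 'k::field) \<Rightarrow> (nat list \<Rightarrow> 'k) \<Rightarrow> nat list \<Rightarrow> 'k" where
  "nc_add f g = (\<lambda>w. f w + g w)"

definition nc_diff :: "(nat list \<Rightarrow> 'k::field) \<Rightarrow> (nat list \<Rightarrow> 'k) \<Rightarrow> nat list \<Rightarrow> 'k" where
  "nc_diff f g = (\<lambda>w. f w - g w)"

definition nc_smult :: "'k::field \<Rightarrow> (nat list \<Rightarrow> 'k) \<Rightarrow> nat list \<Rightarrow> 'k" where
  "nc_smult c f = (\<lambda>w. c * f w)"

definition nc_zero :: "nat list \<Rightarrow> 'k::field" where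
  "nc_zero = (\<lambda>w. 0)"

definition nc_mult :: "(nat list \<Rightarrow> 'k::field) \<Rightarrow> (nat list \<Rightarrow> 'k) \<Rightarrow> nat list \<Rightarrow> 'k" where
  "nc_mult f g = (\<lambda>w. \<Sum>i\<le>length w. f (take i w) * g (drop i w))"

definition nc_var :: "nat \<Rightarrow> nat list \<Rightarrow> 'k::field" where
  "nc_var i = (\<lambda>w. if w = [i] then 1 else 0)"

text \<open>Positive powers f^n (n \<ge> 1) in the non-unital algebra; nc_pow f 0 is unused.\<close>
fun nc_pow :: "(nat list \<Rightarrow> 'k::field) \<Rightarrow> nat \<Rightarrow> nat list \<Rightarrow> 'k" where
  "nc_pow f 0 = nc_zero"
| "nc_pow f (Suc 0) = f"
| "nc_pow f (Suc (Suc n)) = nc_mult f (nc_pow f (Suc n))"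

definition nc_endo :: "((nat list \<Rightarrow> 'k::field) \<Rightarrow> (nat list \<Rightarrow> 'k)) \<Rightarrow> bool" where
  "nc_endo \<phi> \<longleftrightarrow> (\<forall>f\<in>ncp. \<phi> f \<in> ncp)
     \<and> (\<forall>f\<in>ncp. \<forall>g\<in>ncp. \<phi> (nc_add f g) = nc_add (\<phi> f) (\<phi> g))
     \<and> (\<forall>c. \<forall>f\<in>ncp. \<phi> (nc_smult c f) = nc_smult c (\<phi> f))
     \<and> (\<forall>f\<in>ncp. \<forall>g\<in>ncp. \<phi> (nc_mult f g) = nc_mult (\<phi> f) (\<phi> g))"

definition nc_tspace :: "(nat list \<Rightarrow> 'k::field) set \<Rightarrow> bool" where
  "nc_tspace V \<longleftrightarrow> V \<subseteq> ncp \<and> nc_zero \<in> V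
     \<and> (\<forall>f\<in>V. \<forall>g\<in>V. nc_add f g \<in> V)
     \<and> (\<forall>c. \<forall>f\<in>V. nc_smult c f \<in> V)
     \<and> (\<forall>\<phi>. nc_endo \<phi> \<longrightarrow> (\<forall>f\<in>V. \<phi> f \<in> V))"

definition nc_tspace_gen :: "(nat list \<Rightarrow> 'k::field) \<Rightarrow> (nat list \<Rightarrow> 'k) set" where
  "nc_tspace_gen f = \<Inter> {V. nc_tspace V \<and> f \<in> V}"

end

theory Submission
  imports Defs "HOL-Library.Poly_Mapping"
begin


instantiation list :: (type) monoid_add
begin
definition zero_list_def: "0 = []"
definition plus_list_def: "(xs::'a list) + ys = xs @ ys"
instance by standard (auto simp: zero_list_def plus_list_def)
end

type_synonym 'k R = "nat list \<Rightarrow>\<^sub>0 'k"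

abbreviation "lk \<equiv> Poly_Mapping.lookup"
abbreviation "ks \<equiv> Poly_Mapping.keys"
abbreviation "sg \<equiv> Poly_Mapping.single"

lemma lookup_mult_list:
  fixes F G :: "'k::field R"
  shows "lk (F * G) k = (\<Sum>i\<le>length k. lk F (take i k) * lk G (drop i k))"
proof -
  have inner: "(\<Sum>q. lk G q when k = l + q) = (lk G (drop (length l) k) when take (length l) k = l)" for l
  proof -
    have "(\<lambda>q. lk G q when k = l + q) = (\<lambda>q. if q = drop (length l) k then (lk G q when take (length l) k = l) else 0)"
    proof (rule ext)
      fix q
      have e: "(k = l + q) = (take (length l) k = l \<and> q = drop (length l) k)"
        unfolding plus_list_def by (metis append_eq_conv_conj)
      show "(lk G q when k = l + q) = (if q = drop (length l) k then (lk G q when take (length l) k = l) else 0)"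
        unfolding e when_def by simp
    qed
    then show ?thesis by (simp only: Sum_any.delta)
  qed
  have "lk (F * G) k = (\<Sum>l. lk F l * (lk G (drop (length l) k) when take (length l) k = l))"
    by (simp only: lookup_mult inner)
  also have "\<dots> = (\<Sum>l\<in>(\<lambda>i. take i k) ` {..length k}. lk F l * (lk G (drop (length l) k) when take (length l) k = l))"
  proof (rule Sum_any.expand_superset)
    show "finite ((\<lambda>i. take i k) ` {..length k})" by simp
    show "{l. lk F l * (lk G (drop (length l) k) when take (length l) k = l) \<noteq> 0} \<subseteq> (\<lambda>i. take i k) ` {..length k}"
    proof
      fix l assume "l \<in> {l. lk F l * (lk G (drop (length l) k) when take (length l) k = l) \<noteq> 0}"
      then have t: "take (length l) k = l" by (cases "take (length l) k = l") (simp_all add: when_def)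
      have "length (take (length l) k) \<le> length k" by simp
      then have "length l \<le> length k" using t by simp
      show "l \<in> (\<lambda>i. take i k) ` {..length k}"
      proof (rule image_eqI)
        show "l = take (length l) k" using t by simp
        show "length l \<in> {..length k}" using \<open>length l \<le> length k\<close> by simp
      qed
    qed
  qed
  also have "\<dots> = (\<Sum>i\<le>length k. lk F (take i k) * (lk G (drop (length (take i k)) k) when take (length (take i k)) k = take i k))"
  proof (rule sum.reindex[unfolded comp_def])
    show "inj_on (\<lambda>i. take i k) {..length k}"
    proof (rule inj_onI)
      fix i j assume ij: "i \<in> {..length k}" "j \<in> {..length k}" and eq: "take i k = take j k"
      have "i = length (take i k)" using ij by simp
      also have "\<dots> = length (take j k)" using eq by simp
      also have "\<dots> = j" using ij by simp
      finally show "i = j" .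
    qed
  qed
  also have "\<dots> = (\<Sum>i\<le>length k. lk F (take i k) * lk G (drop i k))"
  proof (rule sum.cong[OF refl])
    fix i assume "i \<in> {..length k}"
    then have "length (take i k) = i" by simp
    then show "lk F (take i k) * (lk G (drop (length (take i k)) k) when take (length (take i k)) k = take i k) = lk F (take i k) * lk G (drop i k)"
      by (simp add: when_def)
  qed
  finally show ?thesis .
qed

lemma zero_list_eq: "(0::'a list) = []" by (simp add: zero_list_def)

lemma poly_expand: "(F::'k::field R) = (\<Sum>w\<in>ks F. sg w (lk F w))"
  apply (rule poly_mapping_eqI)
  apply (simp add: lookup_sum lookup_single when_def)
  apply (simp add: in_keys_iff)
  done

definition sc :: "'k::field \<Rightarrow> 'k R" where "sc c = sg 0 c"

lemma sc_mult: "sc a * sc b = sc (a * b)"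
  by (simp add: sc_def mult_single)
lemma sc_add: "sc (a + b) = sc a + sc b"
  by (simp add: sc_def single_add)
lemma sc_0[simp]: "sc 0 = 0" by (simp add: sc_def)
lemma sc_1[simp]: "sc 1 = 1" by (simp add: sc_def)
lemma of_nat_sc: "(of_nat n :: 'k::field R) = sc (of_nat n)"
  by (simp add: sc_def)

lemma sc_single: "sc c * sg w a = sg w (c * a)"
  by (simp add: sc_def mult_single)
lemma single_sc: "sg w a * sc c = sg w (c * a)"
  by (simp add: sc_def mult_single mult.commute)

lemma sc_central: "sc c * F = F * sc c"
proof -
  have "sc c * F = sc c * (\<Sum>w\<in>ks F. sg w (lk F w))"
    by (simp only: poly_expand[symmetric])
  also have "\<dots> = (\<Sum>w\<in>ks F. sg w (lk F w)) * sc c"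
    by (simp add: sum_distrib_left sum_distrib_right sc_single single_sc)
  finally show ?thesis by (simp only: poly_expand[symmetric])
qed

lemma lookup_sc_mult: "lk (sc c * F) k = c * lk F k"
proof -
  have "sc c * F = sc c * (\<Sum>w\<in>ks F. sg w (lk F w))"
    by (simp only: poly_expand[symmetric])
  also have "\<dots> = (\<Sum>w\<in>ks F. sg w (c * lk F w))"
    by (simp add: sum_distrib_left sc_single)
  finally have "lk (sc c * F) k = (\<Sum>w\<in>ks F. c * lk F w when w = k)"
    by (simp add: lookup_sum lookup_single when_def eq_commute)
  also have "\<dots> = c * lk F k"
    by (simp add: when_def in_keys_iff)
  finally show ?thesis .
qed

lemma lookup_mult_Nil: "lk ((F::'k::field R) * G) [] = lk F [] * lk G []"
  by (simp add: lookup_mult_list)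

definition mon :: "(nat \<Rightarrow> 'k::field R) \<Rightarrow> nat list \<Rightarrow> 'k R" where
  "mon \<sigma> w = prod_list (map \<sigma> w)"

definition ev :: "(nat \<Rightarrow> 'k::field R) \<Rightarrow> 'k R \<Rightarrow> 'k R" where
  "ev \<sigma> F = (\<Sum>w\<in>ks F. sc (lk F w) * mon \<sigma> w)"

lemma ev_superset: "finite A \<Longrightarrow> ks F \<subseteq> A \<Longrightarrow> ev \<sigma> F = (\<Sum>w\<in>A. sc (lk F w) * mon \<sigma> w)"
  unfolding ev_def
  by (rule sum.mono_neutral_left) (auto simp: in_keys_iff)

lemma ev_add: "ev \<sigma> (F + G) = ev \<sigma> F + ev \<sigma> G"
proof -
  let ?A = "ks F \<union> ks G"
  have "ev \<sigma> (F + G) = (\<Sum>w\<in>?A. sc (lk (F + G) w) * mon \<sigma> w)"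
    by (rule ev_superset) (auto simp: keys_add)
  also have "\<dots> = (\<Sum>w\<in>?A. sc (lk F w) * mon \<sigma> w) + (\<Sum>w\<in>?A. sc (lk G w) * mon \<sigma> w)"
    by (simp add: lookup_add sc_add distrib_right sum.distrib)
  also have "\<dots> = ev \<sigma> F + ev \<sigma> G"
    by (simp add: ev_superset[symmetric])
  finally show ?thesis .
qed

lemma ev_zero[simp]: "ev \<sigma> 0 = 0" by (simp add: ev_def)

lemma ev_sum: "finite I \<Longrightarrow> ev \<sigma> (\<Sum>i\<in>I. f i) = (\<Sum>i\<in>I. ev \<sigma> (f i))"
  by (induction I rule: finite_induct) (simp_all add: ev_add)

lemma ev_single: "ev \<sigma> (sg w a) = sc a * mon \<sigma> w"
proof -
  have "ev \<sigma> (sg w a) = (\<Sum>v\<in>{w}. sc (lk (sg w a) v) * mon \<sigma> v)"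
    by (rule ev_superset) auto
  then show ?thesis by simp
qed

lemma ev_sc_mult: "ev \<sigma> (sc c * F) = sc c * ev \<sigma> F"
proof -
  have "ev \<sigma> (sc c * F) = (\<Sum>w\<in>ks F. sc (lk (sc c * F) w) * mon \<sigma> w)"
    by (rule ev_superset) (auto simp: in_keys_iff lookup_sc_mult)
  also have "\<dots> = sc c * ev \<sigma> F"
    by (simp add: ev_def lookup_sc_mult sum_distrib_left sc_mult[symmetric] mult.assoc)
  finally show ?thesis .
qed

lemma mon_append: "mon \<sigma> (u @ v) = mon \<sigma> u * mon \<sigma> v"
  by (simp add: mon_def)

lemma ev_mult: "ev \<sigma> (F * G) = ev \<sigma> F * ev \<sigma> G"
proof -
  have "F * G = (\<Sum>u\<in>ks F. sg u (lk F u)) * (\<Sum>v\<in>ks G. sg v (lk G v))"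
    by (simp only: poly_expand[symmetric])
  also have "\<dots> = (\<Sum>u\<in>ks F. \<Sum>v\<in>ks G. sg (u @ v) (lk F u * lk G v))"
    apply (simp add: sum_distrib_left sum_distrib_right mult_single plus_list_def)
    apply (rule sum.swap)
    done
  finally have "ev \<sigma> (F * G) = (\<Sum>u\<in>ks F. \<Sum>v\<in>ks G. sc (lk F u * lk G v) * mon \<sigma> (u @ v))"
    by (simp add: ev_sum ev_single)
  also have "\<dots> = (\<Sum>u\<in>ks F. \<Sum>v\<in>ks G. (sc (lk F u) * mon \<sigma> u) * (sc (lk G v) * mon \<sigma> v))"
  proof (intro sum.cong refl)
    fix u v
    have "sc (lk F u * lk G v) * mon \<sigma> (u @ v) = sc (lk F u) * (sc (lk G v) * mon \<sigma> u) * mon \<sigma> v"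
      by (simp add: mon_append sc_mult[symmetric] mult.assoc)
    also have "\<dots> = (sc (lk F u) * mon \<sigma> u) * (sc (lk G v) * mon \<sigma> v)"
      by (simp only: sc_central[of "lk G v" "mon \<sigma> u"] mult.assoc)
    finally show "sc (lk F u * lk G v) * mon \<sigma> (u @ v) = (sc (lk F u) * mon \<sigma> u) * (sc (lk G v) * mon \<sigma> v)" .
  qed
  also have "\<dots> = ev \<sigma> F * ev \<sigma> G"
    apply (simp add: ev_def sum_distrib_left sum_distrib_right)
    apply (rule sum.swap)
    done
  finally show ?thesis .
qed

lemma ev_one: "ev \<sigma> 1 = 1"
proof -
  have "ev \<sigma> (sg 0 1) = sc 1 * mon \<sigma> 0" by (rule ev_single)
  also have "mon \<sigma> 0 = 1" by (simp add: mon_def zero_list_eq)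
  finally show ?thesis by simp
qed

lemma ev_power: "ev \<sigma> (F ^ n) = (ev \<sigma> F) ^ n"
  by (induction n) (simp_all add: ev_one ev_mult)

lemma ev_var: "ev \<sigma> (sg [i] 1) = \<sigma> i"
  by (simp add: ev_single mon_def)

lemma mon_Nil_coeff: "(\<And>i. lk (\<sigma> i) [] = 0) \<Longrightarrow> lk (mon \<sigma> w) [] = (if w = [] then 1 else 0)"
  by (induction w) (simp_all add: mon_def lookup_mult_Nil lookup_one zero_list_eq)

lemma ev_Nil_coeff: "(\<And>i. lk (\<sigma> i) [] = 0) \<Longrightarrow> lk (ev \<sigma> F) [] = lk F []"
proof -
  assume a: "\<And>i. lk (\<sigma> i) [] = 0"
  have "lk (ev \<sigma> F) [] = (\<Sum>x\<in>ks F. lk F x * (if x = [] then 1 else 0))"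
    by (simp add: ev_def lookup_sum lookup_sc_mult mon_Nil_coeff a)
  also have "\<dots> = (\<Sum>x\<in>ks F. if x = [] then lk F x else 0)"
    by (rule sum.cong) auto
  also have "\<dots> = lk F []"
    by (simp add: sum.delta in_keys_iff)
  finally show ?thesis .
qed




fun E :: "'a::ring_1 \<Rightarrow> 'a \<Rightarrow> nat \<Rightarrow> nat \<Rightarrow> 'a" where
  "E a b 0 j = (if j = 0 then 1 else 0)"
| "E a b (Suc n) j = E a b n j * a + (if j = 0 then 0 else E a b n (j - 1) * b)"

lemma E_comm:
  fixes a b s :: "'a::ring_1"
  assumes sa: "s * a = a * s" and sb: "s * b = b * s"
  shows "s * E a b n j = E a b n j * s"
proof (induction n arbitrary: j)
  case 0
  show ?case by simp
next
  case (Suc n)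
  have h1: "s * (E a b n j * a) = E a b n j * a * s"
    by (metis Suc.IH sa mult.assoc)
  have h2: "s * (E a b n (j - 1) * b) = E a b n (j - 1) * b * s"
    by (metis Suc.IH sb mult.assoc)
  show ?case using h1 h2 by (simp add: distrib_left distrib_right)
qed

lemma E_high: "n < j \<Longrightarrow> E a b n j = 0"
  by (induction n arbitrary: j) auto

lemma E_0: "E a b n 0 = a ^ n"
  by (induction n) (simp_all add: power_commutes)

lemma E_diag: "E a b n n = b ^ n"
  by (induction n) (simp_all add: E_high power_commutes)

lemma E_1: "E a (a * y - y * a) n 1 = a ^ n * y - y * a ^ n"
proof (induction n)
  case 0
  show ?case by simp
next
  case (Suc n)
  have "E a (a * y - y * a) (Suc n) 1 = (a ^ n * y - y * a ^ n) * a + a ^ n * (a * y - y * a)"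
    using Suc.IH by (simp add: E_0)
  also have "\<dots> = (a ^ n * a) * y - y * (a ^ n * a)"
    by (simp add: algebra_simps)
  also have "\<dots> = a ^ Suc n * y - y * a ^ Suc n"
    by (simp only: power_Suc2)
  finally show ?case .
qed

lemma E_expand:
  fixes a b s :: "'a::ring_1"
  assumes sa: "s * a = a * s" and sb: "s * b = b * s"
  shows "(a + s * b) ^ n = (\<Sum>j\<le>n. s ^ j * E a b n j)"
proof (induction n)
  case 0
  show ?case by simp
next
  case (Suc n)
  have t: "s ^ j * E a b n j * (s * b) = s ^ Suc j * (E a b n j * b)" for j
  proof -
    have "s ^ j * E a b n j * (s * b) = s ^ j * ((E a b n j * s) * b)" by (simp only: mult.assoc)
    also have "\<dots> = s ^ j * ((s * E a b n j) * b)" by (simp only: E_comm[OF sa sb])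
    also have "\<dots> = (s ^ j * s) * (E a b n j * b)" by (simp only: mult.assoc)
    also have "\<dots> = s ^ Suc j * (E a b n j * b)" by (simp only: power_Suc2)
    finally show ?thesis .
  qed
  have "(a + s * b) ^ Suc n = (\<Sum>j\<le>n. s ^ j * E a b n j) * (a + s * b)"
    by (simp only: Suc.IH power_Suc2)
  also have "\<dots> = (\<Sum>j\<le>n. s ^ j * E a b n j * a) + (\<Sum>j\<le>n. s ^ Suc j * (E a b n j * b))"
    by (simp add: distrib_left sum_distrib_right sum.distrib t)
  also have "\<dots> = (\<Sum>j\<le>Suc n. s ^ j * (E a b n j * a)) + (\<Sum>j\<le>Suc n. s ^ j * (if j = 0 then 0 else E a b n (j - 1) * b))"
  proof -
    have "(\<Sum>j\<le>Suc n. s ^ j * (E a b n j * a)) = (\<Sum>j\<le>n. s ^ j * E a b n j * a)"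
      by (simp add: E_high mult.assoc)
    moreover have "(\<Sum>j\<le>Suc n. s ^ j * (if j = 0 then 0 else E a b n (j - 1) * b)) = (\<Sum>j\<le>n. s ^ Suc j * (E a b n j * b))"
      by (simp only: sum.atMost_Suc_shift) simp
    ultimately show ?thesis by simp
  qed
  also have "\<dots> = (\<Sum>j\<le>Suc n. s ^ j * E a b (Suc n) j)"
    by (simp add: sum.distrib distrib_left)
  finally show ?case .
qed

lemma char_sum:
  fixes p :: nat
  assumes ch: "CHAR('k::field) = p" and pr: "prime p"
  shows "1 \<le> m \<Longrightarrow> m + 2 \<le> p \<Longrightarrow> (\<Sum>t<p. (of_nat t :: 'k) ^ m) = 0"
proof (induction m rule: less_induct)
  case (less m)
  define S where "S i = (\<Sum>t<p. (of_nat t :: 'k) ^ i)" for i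
  have p0: "(of_nat p :: 'k) = 0" using ch by (metis of_nat_CHAR)
  have S0: "S 0 = 0"
    using p0 by (simp add: S_def)
  have tel: "(\<Sum>t<p. (of_nat (Suc t) :: 'k) ^ (m + 1) - (of_nat t) ^ (m + 1)) = 0"
    using sum_lessThan_telescope[of "\<lambda>t. (of_nat t :: 'k) ^ (m + 1)" p] p0 by simp
  have bin: "(of_nat (Suc t) :: 'k) ^ (m + 1) - (of_nat t) ^ (m + 1) = (\<Sum>i\<le>m. of_nat (Suc m choose i) * (of_nat t) ^ i)" for t
  proof -
    have "(of_nat (Suc t) :: 'k) ^ (m + 1) = (of_nat t + 1) ^ Suc m" by (simp add: add.commute)
    also have "\<dots> = (\<Sum>i\<le>Suc m. of_nat (Suc m choose i) * (of_nat t) ^ i * 1 ^ (Suc m - i))"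
      by (rule binomial_ring)
    also have "\<dots> = (\<Sum>i\<le>m. of_nat (Suc m choose i) * (of_nat t) ^ i) + (of_nat t) ^ (m + 1)"
      by simp
    finally show ?thesis by simp
  qed
  have "(\<Sum>i\<le>m. of_nat (Suc m choose i) * S i) = 0"
  proof -
    have "(\<Sum>i\<le>m. of_nat (Suc m choose i) * S i) = (\<Sum>t<p. \<Sum>i\<le>m. of_nat (Suc m choose i) * (of_nat t :: 'k) ^ i)"
      unfolding S_def by (simp add: sum_distrib_left sum.swap[of _ "{..<p}"])
    also have "\<dots> = 0" using tel bin by simp
    finally show ?thesis .
  qed
  moreover have "(\<Sum>i<m. of_nat (Suc m choose i) * S i) = 0"
  proof (rule sum.neutral, rule ballI)
    fix i assume "i \<in> {..<m}"
    then have im: "i < m" by simp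
    show "of_nat (Suc m choose i) * S i = 0"
    proof (cases "i = 0")
      case True then show ?thesis using S0 by simp
    next
      case False
      then have "S i = 0" unfolding S_def using less.IH[of i] im less.prems by simp
      then show ?thesis by simp
    qed
  qed
  ultimately have "of_nat (Suc m choose m) * S m = 0"
    by (simp add: lessThan_Suc_atMost[symmetric])
  moreover have "(of_nat (Suc m) :: 'k) \<noteq> 0"
  proof
    assume "(of_nat (Suc m) :: 'k) = 0"
    then have "p dvd Suc m" using ch by (metis of_nat_eq_0_iff_char_dvd)
    then show False using less.prems by (simp add: dvd_imp_le) (metis dvd_imp_le le_trans not_less_eq_eq zero_less_Suc add_2_eq_Suc' le_add2)
  qed
  ultimately show ?case by (simp add: S_def)
qed




lemma of_nat_R_dvd: "CHAR('k::field) dvd n \<Longrightarrow> (of_nat n :: 'k R) = 0"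
proof -
  assume "CHAR('k) dvd n"
  then have "(of_nat n :: 'k) = 0" by (simp only: of_nat_eq_0_iff_char_dvd)
  then show ?thesis by (simp add: of_nat_sc)
qed

lemma sc_inv_of_nat: "(of_nat t :: 'k::field) \<noteq> 0 \<Longrightarrow> sc (inverse (of_nat t :: 'k)) * (of_nat t :: 'k R) = 1"
  by (simp add: of_nat_sc sc_mult)

lemma swap_helper:
  fixes f :: "nat \<Rightarrow> nat \<Rightarrow> 'a::ring_1"
  shows "(\<Sum>t\<in>A. \<Sum>j\<in>B. f t j * g j) = (\<Sum>j\<in>B. (\<Sum>t\<in>A. f t j) * g j)"
  unfolding sum_distrib_right by (rule sum.swap)

lemma key_G:
  fixes X C :: "'k::field R" and p :: nat
  assumes p2: "2 \<le> p"
  shows "(X + of_nat t * C) ^ p - X ^ p - of_nat t ^ p * C ^ p = (\<Sum>j\<in>{1..<p}. of_nat t ^ j * E X C p j)"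
proof -
  have "(X + of_nat t * C) ^ p = (\<Sum>j\<le>p. of_nat t ^ j * E X C p j)"
    by (rule E_expand) (simp_all add: mult_of_nat_commute)
  also have "{..p} = insert 0 (insert p {1..<p})" using p2 by auto
  also have "(\<Sum>j\<in>insert 0 (insert p {1..<p}). (of_nat t :: 'k R) ^ j * E X C p j)
      = X ^ p + (of_nat t ^ p * C ^ p + (\<Sum>j\<in>{1..<p}. of_nat t ^ j * E X C p j))"
    using p2 by (simp add: E_0 E_diag)
  finally show ?thesis by (simp add: algebra_simps)
qed

lemma key_nz:
  assumes ch: "CHAR('k::field) = p" and t: "t \<in> {1..<p}"
  shows "(of_nat t :: 'k) \<noteq> 0"
proof
  assume "(of_nat t :: 'k) = 0"
  then have "p dvd t" using ch by (metis of_nat_eq_0_iff_char_dvd)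
  then show False using t by (auto dest: dvd_imp_le)
qed

lemma key_step:
  fixes X C :: "'k::field R" and p :: nat
  assumes p2: "2 \<le> p" and nz: "(of_nat t :: 'k) \<noteq> 0"
  shows "sc (inverse (of_nat t)) * ((X + of_nat t * C) ^ p - X ^ p - of_nat t ^ p * C ^ p)
        = (\<Sum>j\<in>{1..<p}. (of_nat t :: 'k R) ^ (j - 1) * E X C p j)"
proof -
  have "sc (inverse (of_nat t)) * ((X + of_nat t * C) ^ p - X ^ p - of_nat t ^ p * C ^ p)
      = (\<Sum>j\<in>{1..<p}. (sc (inverse (of_nat t)) * of_nat t) * (of_nat t ^ (j - 1) * E X C p j))"
    unfolding key_G[OF p2] sum_distrib_left
  proof (rule sum.cong[OF refl])
    fix j assume "j \<in> {1..<p}"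
    then have "j = Suc (j - 1)" by simp
    then have "(of_nat t :: 'k R) ^ j = of_nat t * of_nat t ^ (j - 1)" by (metis power_Suc)
    then show "sc (inverse (of_nat t)) * (of_nat t ^ j * E X C p j) = (sc (inverse (of_nat t)) * of_nat t) * (of_nat t ^ (j - 1) * E X C p j)"
      by (simp add: mult.assoc)
  qed
  also have "\<dots> = (\<Sum>j\<in>{1..<p}. (of_nat t :: 'k R) ^ (j - 1) * E X C p j)"
    using sc_inv_of_nat[OF nz] by simp
  finally show ?thesis .
qed

lemma key_coeff:
  fixes p :: nat
  assumes ch: "CHAR('k::field) = p" and pr: "prime p" and j: "j \<in> {1..<p}"
  shows "(\<Sum>t\<in>{1..<p}. (of_nat t :: 'k R) ^ (j - 1)) = (if j = 1 then - 1 else 0)"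
proof -
  have p2: "2 \<le> p" using pr by (simp add: prime_ge_2_nat)
  show ?thesis
  proof (cases "j = 1")
    case True
    have "(of_nat (p - 1) :: 'k R) + 1 = of_nat p" using p2 by (simp add: of_nat_diff)
    also have "\<dots> = 0" using ch by (simp add: of_nat_R_dvd)
    finally have "(of_nat (p - 1) :: 'k R) = - 1" by (simp add: eq_neg_iff_add_eq_0)
    then show ?thesis using True by simp
  next
    case False
    then have m: "1 \<le> j - 1" "j - 1 + 2 \<le> p" using j by auto
    have "(\<Sum>t\<in>{1..<p}. (of_nat t :: 'k R) ^ (j - 1)) = of_nat (\<Sum>t\<in>{1..<p}. t ^ (j - 1))"
      by simp
    also have "\<dots> = sc (of_nat (\<Sum>t\<in>{1..<p}. t ^ (j - 1)))"
      by (rule of_nat_sc)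
    also have "(of_nat (\<Sum>t\<in>{1..<p}. t ^ (j - 1)) :: 'k) = (\<Sum>t\<in>{1..<p}. (of_nat t :: 'k) ^ (j - 1))"
      by simp
    also have "\<dots> = (\<Sum>t<p. (of_nat t :: 'k) ^ (j - 1))"
    proof -
      have "{..<p} = insert 0 {1..<p}" using p2 by auto
      then show ?thesis using m by simp
    qed
    also have "\<dots> = 0" by (rule char_sum[OF ch pr m])
    finally show ?thesis using False by simp
  qed
qed

lemma key_identity:
  fixes X Y :: "'k::field R" and p :: nat
  assumes ch: "CHAR('k) = p" and pr: "prime p"
  shows "(\<Sum>t\<in>{1..<p}. sc (inverse (of_nat t)) * ((X + of_nat t * (X * Y - Y * X)) ^ p - X ^ p - of_nat t ^ p * (X * Y - Y * X) ^ p))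
         = - (X ^ p * Y - Y * X ^ p)"
proof -
  have p2: "2 \<le> p" using pr by (simp add: prime_ge_2_nat)
  let ?C = "X * Y - Y * X"
  have "(\<Sum>t\<in>{1..<p}. sc (inverse (of_nat t)) * ((X + of_nat t * ?C) ^ p - X ^ p - of_nat t ^ p * ?C ^ p))
      = (\<Sum>t\<in>{1..<p}. \<Sum>j\<in>{1..<p}. (of_nat t :: 'k R) ^ (j - 1) * E X ?C p j)"
    by (rule sum.cong[OF refl], rule key_step[OF p2 key_nz[OF ch]])
  also have "\<dots> = (\<Sum>j\<in>{1..<p}. (\<Sum>t\<in>{1..<p}. (of_nat t :: 'k R) ^ (j - 1)) * E X ?C p j)"
    by (rule swap_helper)
  also have "\<dots> = (\<Sum>j\<in>{1..<p}. (if j = 1 then - E X ?C p j else 0))"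
  proof (rule sum.cong[OF refl])
    fix j assume j: "j \<in> {1..<p}"
    have kc: "(\<Sum>t\<in>{1..<p}. (of_nat t :: 'k R) ^ (j - 1)) = (if j = 1 then - 1 else 0)"
      by (rule key_coeff[OF ch pr j])
    show "(\<Sum>t\<in>{1..<p}. (of_nat t :: 'k R) ^ (j - 1)) * E X ?C p j = (if j = 1 then - E X ?C p j else 0)"
      by (simp only: kc) simp
  qed
  also have "\<dots> = - E X ?C p 1"
    using p2 by (simp add: sum.delta)
  also have "E X ?C p 1 = X ^ p * Y - Y * X ^ p"
    by (rule E_1)
  finally show ?thesis .
qed




lemma ncp_lk: "lk X [] = 0 \<Longrightarrow> lk X \<in> ncp"
  by (simp add: ncp_def)

lemma ncp_E: "f \<in> ncp \<Longrightarrow> \<exists>X. f = lk X \<and> lk X [] = 0"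
proof -
  assume "f \<in> ncp"
  then have fin: "finite {w. f w \<noteq> 0}" and z: "f [] = 0" by (auto simp: ncp_def)
  have "lk (Abs_poly_mapping f) = f" using fin by simp
  then show ?thesis using z by metis
qed

lemma nc_add_lk: "nc_add (lk X) (lk Y) = lk (X + Y)"
  by (simp add: nc_add_def fun_eq_iff lookup_add)
lemma nc_diff_lk: "nc_diff (lk X) (lk Y) = lk (X - Y)"
  by (simp add: nc_diff_def fun_eq_iff lookup_minus)
lemma nc_smult_lk: "nc_smult c (lk X) = lk (sc c * X)"
  by (simp add: nc_smult_def fun_eq_iff lookup_sc_mult)
lemma nc_mult_lk: "nc_mult (lk X) (lk (Y::'k::field R)) = lk (X * Y)"
  by (simp add: nc_mult_def fun_eq_iff lookup_mult_list)
lemma nc_zero_lk: "(nc_zero :: nat list \<Rightarrow> 'k::field) = lk 0"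
  by (simp add: nc_zero_def fun_eq_iff)
lemma nc_var_lk: "(nc_var i :: nat list \<Rightarrow> 'k::field) = lk (sg [i] 1)"
  by (simp add: nc_var_def fun_eq_iff lookup_single when_def eq_commute)
lemma nc_pow_lk: "nc_pow (lk (X::'k::field R)) (Suc n) = lk (X ^ Suc n)"
proof (induction n)
  case 0 show ?case by simp
next
  case (Suc n)
  have "nc_pow (lk X) (Suc (Suc n)) = nc_mult (lk X) (nc_pow (lk X) (Suc n))" by simp
  also have "\<dots> = lk (X * X ^ Suc n)" by (simp only: Suc.IH nc_mult_lk)
  finally show ?case by simp
qed

lemma lk_Nil_add: "lk (X + Y) [] = lk X [] + lk Y []" by (simp add: lookup_add)
lemma lk_Nil_minus: "lk (X - Y) [] = lk X [] - lk Y []" by (simp add: lookup_minus)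

definition Phi :: "'k::field R \<Rightarrow> (nat list \<Rightarrow> 'k) \<Rightarrow> (nat list \<Rightarrow> 'k)" where
  "Phi H f = lk (ev (\<lambda>i. H) (Abs_poly_mapping f))"

lemma Phi_lk: "Phi H (lk X) = lk (ev (\<lambda>i. H) X)"
  by (simp add: Phi_def)

lemma Phi_endo:
  fixes H :: "'k::field R"
  assumes H: "lk H [] = 0"
  shows "nc_endo (Phi H)"
  unfolding nc_endo_def
proof (intro conjI ballI allI)
  fix f :: "nat list \<Rightarrow> 'k" assume "f \<in> ncp"
  then obtain X where X: "f = lk X" "lk X [] = 0" using ncp_E by blast
  show "Phi H f \<in> ncp" unfolding X Phi_lk
    by (rule ncp_lk) (simp add: ev_Nil_coeff H X)
next
  fix f g :: "nat list \<Rightarrow> 'k" assume "f \<in> ncp" "g \<in> ncp"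
  then obtain X Y where X: "f = lk X" and Y: "g = lk Y" using ncp_E by blast
  show "Phi H (nc_add f g) = nc_add (Phi H f) (Phi H g)"
    unfolding X Y nc_add_lk Phi_lk ev_add ..
  show "Phi H (nc_mult f g) = nc_mult (Phi H f) (Phi H g)"
    unfolding X Y nc_mult_lk Phi_lk ev_mult ..
next
  fix c :: 'k and f :: "nat list \<Rightarrow> 'k" assume "f \<in> ncp"
  then obtain X where X: "f = lk X" using ncp_E by blast
  show "Phi H (nc_smult c f) = nc_smult c (Phi H f)"
    unfolding X nc_smult_lk Phi_lk ev_sc_mult ..
qed

lemma Phi_gen:
  assumes p: "p \<ge> 1"
  shows "Phi H (nc_pow (nc_var 0) p) = lk (H ^ p)"
proof -
  obtain n where n: "p = Suc n" using p by (cases p) auto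
  have "Phi H (nc_pow (nc_var 0) p) = Phi H (lk (sg [0] 1 ^ p))"
    unfolding n nc_var_lk nc_pow_lk ..
  also have "\<dots> = lk (H ^ p)"
    unfolding Phi_lk ev_power ev_var ..
  finally show ?thesis .
qed

lemma tspace_ncp: "nc_tspace (ncp :: (nat list \<Rightarrow> 'k::field) set)"
  unfolding nc_tspace_def
proof (intro conjI ballI allI impI subset_refl)
  show "(nc_zero :: nat list \<Rightarrow> 'k) \<in> ncp" unfolding nc_zero_lk by (rule ncp_lk) simp
next
  fix f g :: "nat list \<Rightarrow> 'k" assume "f \<in> ncp" "g \<in> ncp"
  then obtain X Y where X: "f = lk X" "lk X [] = 0" and Y: "g = lk Y" "lk Y [] = 0" using ncp_E by metis
  show "nc_add f g \<in> ncp" unfolding X Y nc_add_lk by (rule ncp_lk) (simp add: lk_Nil_add X Y)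
next
  fix c :: 'k and f :: "nat list \<Rightarrow> 'k" assume "f \<in> ncp"
  then obtain X where X: "f = lk X" "lk X [] = 0" using ncp_E by metis
  show "nc_smult c f \<in> ncp" unfolding X nc_smult_lk by (rule ncp_lk) (simp add: lookup_sc_mult X)
next
  fix \<phi> :: "(nat list \<Rightarrow> 'k) \<Rightarrow> (nat list \<Rightarrow> 'k)" and f :: "nat list \<Rightarrow> 'k" assume "nc_endo \<phi>" "f \<in> ncp"
  then show "\<phi> f \<in> ncp" by (simp add: nc_endo_def)
qed

lemma tspace_Inter:
  assumes "\<And>V. V \<in> \<V> \<Longrightarrow> nc_tspace V" and "\<V> \<noteq> {}"
  shows "nc_tspace (\<Inter>\<V>)"
  using assms unfolding nc_tspace_def by blast

lemma gen_ncp: "p \<ge> 1 \<Longrightarrow> (nc_pow (nc_var 0) p :: nat list \<Rightarrow> 'k::field) \<in> ncp"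
proof -
  assume p: "p \<ge> 1"
  then obtain n where n: "p = Suc n" by (cases p) auto
  show ?thesis unfolding n nc_var_lk nc_pow_lk
    by (rule ncp_lk) (simp add: lookup_mult_Nil lookup_single when_def)
qed




lemma sc_neg1: "sc (-1) * (Y :: 'k::field R) = - Y"
  by (simp add: sc_def single_uminus)

lemma comm_lk: "nc_diff (nc_mult (lk A) (lk V)) (nc_mult (lk V) (lk (A::'k::field R))) = lk (A * V - V * A)"
  by (simp only: nc_mult_lk nc_diff_lk)

lemma endo_comp: "nc_endo \<psi> \<Longrightarrow> nc_endo \<phi> \<Longrightarrow> nc_endo (\<psi> \<circ> \<phi>)"
  unfolding nc_endo_def by auto

lemma endo_id: "nc_endo id"
  unfolding nc_endo_def by auto

lemma pow_ncp: "f \<in> ncp \<Longrightarrow> nc_pow f (Suc n) \<in> (ncp :: (nat list \<Rightarrow> 'k::field) set)"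
proof -
  assume "f \<in> ncp"
  then obtain X :: "'k R" where X: "f = lk X" "lk X [] = 0" using ncp_E by metis
  show ?thesis unfolding X nc_pow_lk
    by (rule ncp_lk) (simp add: lookup_mult_Nil X)
qed

lemma endo_pow: "nc_endo \<psi> \<Longrightarrow> f \<in> ncp \<Longrightarrow> \<psi> (nc_pow f (Suc n)) = nc_pow (\<psi> f) (Suc n)"
proof (induction n)
  case 0 then show ?case by simp
next
  case (Suc n)
  have "\<psi> (nc_pow f (Suc (Suc n))) = \<psi> (nc_mult f (nc_pow f (Suc n)))" by simp
  also have "\<dots> = nc_mult (\<psi> f) (\<psi> (nc_pow f (Suc n)))"
    using Suc.prems pow_ncp[OF Suc.prems(2), of n] unfolding nc_endo_def by blast
  also have "\<dots> = nc_pow (\<psi> f) (Suc (Suc n))" using Suc by simp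
  finally show ?case .
qed

lemma var_ncp: "(nc_var i :: nat list \<Rightarrow> 'k::field) \<in> ncp"
  unfolding nc_var_lk by (rule ncp_lk) (simp add: lookup_single when_def)

theorem corollary4p3:
  fixes p :: nat and u v :: "nat list \<Rightarrow> 'k::field"
  assumes "prime p" and "CHAR('k) = p"
    and "u \<in> nc_tspace_gen (nc_pow (nc_var 0 :: nat list \<Rightarrow> 'k) p)"
    and "v \<in> ncp"
  shows "nc_diff (nc_mult u v) (nc_mult v u) \<in> nc_tspace_gen (nc_pow (nc_var 0 :: nat list \<Rightarrow> 'k) p)"
proof -
  note pr = assms(1) and ch = assms(2)
  let ?g = "nc_pow (nc_var 0 :: nat list \<Rightarrow> 'k) p"
  define T where "T = nc_tspace_gen ?g"
  have p2: "2 \<le> p" using pr by (simp add: prime_ge_2_nat)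
  have gncp: "?g \<in> ncp" by (rule gen_ncp) (use p2 in simp)
  have TT: "nc_tspace T" unfolding T_def nc_tspace_gen_def
    by (rule tspace_Inter) (use tspace_ncp gncp in auto)
  have Tncp: "T \<subseteq> ncp" using TT unfolding nc_tspace_def by blast
  have gT: "?g \<in> T" unfolding T_def nc_tspace_gen_def by blast
  have powT: "lk (H ^ p) \<in> T" if H: "lk H [] = 0" for H :: "'k R"
  proof -
    have "\<forall>V. nc_tspace V \<and> ?g \<in> V \<longrightarrow> lk (H ^ p) \<in> V"
    proof (intro allI impI)
      fix V assume V: "nc_tspace V \<and> ?g \<in> V"
      then have "Phi H ?g \<in> V" using Phi_endo[OF H] unfolding nc_tspace_def by blast
      then show "lk (H ^ p) \<in> V" using Phi_gen[of p H] p2 by simp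
    qed
    then show ?thesis unfolding T_def nc_tspace_gen_def by blast
  qed
  have addT: "lk (X + Y) \<in> T" if "lk X \<in> T" "lk Y \<in> T" for X Y :: "'k R"
  proof -
    have "nc_add (lk X) (lk Y) \<in> T" using TT that unfolding nc_tspace_def by blast
    then show ?thesis by (simp only: nc_add_lk)
  qed
  have scT: "lk (sc c * X) \<in> T" if "lk X \<in> T" for X :: "'k R" and c
  proof -
    have "nc_smult c (lk X) \<in> T" using TT that unfolding nc_tspace_def by blast
    then show ?thesis by (simp only: nc_smult_lk)
  qed
  have zeroT: "lk (0 :: 'k R) \<in> T"
    using TT unfolding nc_tspace_def nc_zero_lk by blast
  have sumT: "finite I \<Longrightarrow> (\<forall>i\<in>I. lk (f i) \<in> T) \<Longrightarrow> lk (\<Sum>i\<in>I. f i) \<in> T" for I and f :: "nat \<Rightarrow> 'k R"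
    by (induction I rule: finite_induct) (simp_all add: zeroT addT)
  have minusT: "lk (X - Y) \<in> T" if "lk X \<in> T" "lk Y \<in> T" for X Y :: "'k R"
  proof -
    have "lk (X + sc (-1) * Y) \<in> T" using that by (simp add: addT scT)
    then show ?thesis by (simp add: sc_neg1)
  qed
  have negT: "lk X \<in> T" if "lk (- X) \<in> T" for X :: "'k R"
  proof -
    have "lk (sc (-1) * (- X)) \<in> T" using that by (rule scT)
    then show ?thesis by (simp add: sc_neg1)
  qed
  have keyT: "lk (X ^ p * Y - Y * X ^ p) \<in> T" if X: "lk X [] = 0" and Y: "lk Y [] = 0" for X Y :: "'k R"
  proof -
    let ?C = "X * Y - Y * X"
    have C0: "lk ?C [] = 0" using X Y by (simp add: lookup_minus lookup_mult_Nil)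
    have "lk (\<Sum>t\<in>{1..<p}. sc (inverse (of_nat t)) * ((X + of_nat t * ?C) ^ p - X ^ p - of_nat t ^ p * ?C ^ p)) \<in> T"
    proof (rule sumT, simp, rule ballI)
      fix t
      have a: "lk ((X + of_nat t * ?C) ^ p) \<in> T"
        by (rule powT) (simp add: lookup_add of_nat_sc lookup_sc_mult X C0)
      have b: "lk (X ^ p) \<in> T" by (rule powT[OF X])
      have c: "lk ((of_nat t :: 'k R) ^ p * ?C ^ p) \<in> T"
      proof -
        have "lk (sc (of_nat (t ^ p)) * ?C ^ p) \<in> T" by (rule scT, rule powT[OF C0])
        moreover have "(of_nat t :: 'k R) ^ p = sc (of_nat (t ^ p))"
        proof -
          have "(of_nat t :: 'k R) ^ p = of_nat (t ^ p)" by (rule of_nat_power[symmetric])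
          also have "\<dots> = sc (of_nat (t ^ p))" by (rule of_nat_sc)
          finally show ?thesis .
        qed
        ultimately show ?thesis by simp
      qed
      show "lk (sc (inverse (of_nat t)) * ((X + of_nat t * ?C) ^ p - X ^ p - of_nat t ^ p * ?C ^ p)) \<in> T"
        by (rule scT, rule minusT, rule minusT, rule a, rule b, rule c)
    qed
    then have "lk (- (X ^ p * Y - Y * X ^ p)) \<in> T"
      by (simp only: key_identity[OF ch pr])
    then show ?thesis by (rule negT)
  qed
  define W where "W = {u \<in> T. \<forall>\<psi>. nc_endo \<psi> \<longrightarrow> (\<forall>v\<in>ncp. nc_diff (nc_mult (\<psi> u) v) (nc_mult v (\<psi> u)) \<in> T)}"
  have WT: "nc_tspace W"
    unfolding nc_tspace_def
  proof (intro conjI ballI allI impI)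
    show "W \<subseteq> ncp" using Tncp unfolding W_def by blast
  next
    show "nc_zero \<in> W" unfolding W_def
    proof (intro CollectI conjI allI impI ballI)
      show "nc_zero \<in> T" using TT unfolding nc_tspace_def by blast
    next
      fix \<psi> :: "(nat list \<Rightarrow> 'k) \<Rightarrow> (nat list \<Rightarrow> 'k)" and v :: "nat list \<Rightarrow> 'k"
      assume \<psi>: "nc_endo \<psi>" and v: "v \<in> ncp"
      have z: "nc_zero = nc_smult 0 (nc_zero :: nat list \<Rightarrow> 'k)" by (simp add: nc_smult_def nc_zero_def)
      have zn: "(nc_zero :: nat list \<Rightarrow> 'k) \<in> ncp" using tspace_ncp unfolding nc_tspace_def by blast
      have "\<psi> nc_zero = nc_smult 0 (\<psi> nc_zero)" using \<psi> zn z unfolding nc_endo_def by metis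
      then have pz: "\<psi> nc_zero = nc_zero" by (simp add: nc_smult_def nc_zero_def)
      obtain V :: "'k R" where V: "v = lk V" using ncp_E[OF v] by blast
      show "nc_diff (nc_mult (\<psi> nc_zero) v) (nc_mult v (\<psi> nc_zero)) \<in> T"
        unfolding pz unfolding V nc_zero_lk comm_lk using zeroT by simp
    qed
  next
    fix f g assume f: "f \<in> W" and g: "g \<in> W"
    show "nc_add f g \<in> W" unfolding W_def
    proof (intro CollectI conjI allI impI ballI)
      show "nc_add f g \<in> T" using TT f g unfolding nc_tspace_def W_def by blast
    next
      fix \<psi> :: "(nat list \<Rightarrow> 'k) \<Rightarrow> (nat list \<Rightarrow> 'k)" and v :: "nat list \<Rightarrow> 'k"
      assume \<psi>: "nc_endo \<psi>" and v: "v \<in> ncp"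
      have fn: "f \<in> ncp" "g \<in> ncp" using f g Tncp unfolding W_def by auto
      then have e: "\<psi> (nc_add f g) = nc_add (\<psi> f) (\<psi> g)" using \<psi> unfolding nc_endo_def by blast
      have "\<psi> f \<in> ncp" "\<psi> g \<in> ncp" using fn \<psi> unfolding nc_endo_def by auto
      then obtain A B :: "'k R" where A: "\<psi> f = lk A" and B: "\<psi> g = lk B" using ncp_E by metis
      obtain V :: "'k R" where V: "v = lk V" using ncp_E[OF v] by blast
      have fa: "lk (A * V - V * A) \<in> T"
      proof -
        have "nc_diff (nc_mult (\<psi> f) v) (nc_mult v (\<psi> f)) \<in> T" using f \<psi> v unfolding W_def by blast
        then show ?thesis by (simp only: A V comm_lk)
      qed
      have gb: "lk (B * V - V * B) \<in> T"
      proof -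
        have "nc_diff (nc_mult (\<psi> g) v) (nc_mult v (\<psi> g)) \<in> T" using g \<psi> v unfolding W_def by blast
        then show ?thesis by (simp only: B V comm_lk)
      qed
      have "(A + B) * V - V * (A + B) = (A * V - V * A) + (B * V - V * B)"
        by (simp add: algebra_simps)
      then show "nc_diff (nc_mult (\<psi> (nc_add f g)) v) (nc_mult v (\<psi> (nc_add f g))) \<in> T"
        unfolding e A B V nc_add_lk comm_lk using addT[OF fa gb] by simp
    qed
  next
    fix c and f assume f: "f \<in> W"
    show "nc_smult c f \<in> W" unfolding W_def
    proof (intro CollectI conjI allI impI ballI)
      show "nc_smult c f \<in> T" using TT f unfolding nc_tspace_def W_def by blast
    next
      fix \<psi> :: "(nat list \<Rightarrow> 'k) \<Rightarrow> (nat list \<Rightarrow> 'k)" and v :: "nat list \<Rightarrow> 'k"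
      assume \<psi>: "nc_endo \<psi>" and v: "v \<in> ncp"
      have fn: "f \<in> ncp" using f Tncp unfolding W_def by auto
      then have e: "\<psi> (nc_smult c f) = nc_smult c (\<psi> f)" using \<psi> unfolding nc_endo_def by blast
      have "\<psi> f \<in> ncp" using fn \<psi> unfolding nc_endo_def by auto
      then obtain A :: "'k R" where A: "\<psi> f = lk A" using ncp_E by metis
      obtain V :: "'k R" where V: "v = lk V" using ncp_E[OF v] by blast
      have fa: "lk (A * V - V * A) \<in> T"
      proof -
        have "nc_diff (nc_mult (\<psi> f) v) (nc_mult v (\<psi> f)) \<in> T" using f \<psi> v unfolding W_def by blast
        then show ?thesis by (simp only: A V comm_lk)
      qed
      have "V * (sc c * A) = sc c * (V * A)"
        by (simp only: mult.assoc[symmetric] sc_central[of c V])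
      then have "(sc c * A) * V - V * (sc c * A) = sc c * (A * V - V * A)"
        by (simp add: algebra_simps)
      then show "nc_diff (nc_mult (\<psi> (nc_smult c f)) v) (nc_mult v (\<psi> (nc_smult c f))) \<in> T"
        unfolding e A V nc_smult_lk comm_lk using scT[OF fa] by simp
    qed
  next
    fix \<phi> :: "(nat list \<Rightarrow> 'k) \<Rightarrow> (nat list \<Rightarrow> 'k)" and f :: "nat list \<Rightarrow> 'k"
    assume \<phi>: "nc_endo \<phi>" and f: "f \<in> W"
    show "\<phi> f \<in> W" unfolding W_def
    proof (intro CollectI conjI allI impI ballI)
      show "\<phi> f \<in> T" using TT f \<phi> unfolding nc_tspace_def W_def by blast
    next
      fix \<psi> :: "(nat list \<Rightarrow> 'k) \<Rightarrow> (nat list \<Rightarrow> 'k)" and v :: "nat list \<Rightarrow> 'k"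
      assume \<psi>: "nc_endo \<psi>" and v: "v \<in> ncp"
      have "nc_endo (\<psi> \<circ> \<phi>)" by (rule endo_comp[OF \<psi> \<phi>])
      then have "nc_diff (nc_mult ((\<psi> \<circ> \<phi>) f) v) (nc_mult v ((\<psi> \<circ> \<phi>) f)) \<in> T"
        using f v unfolding W_def by blast
      then show "nc_diff (nc_mult (\<psi> (\<phi> f)) v) (nc_mult v (\<psi> (\<phi> f))) \<in> T" by simp
    qed
  qed
  have gW: "?g \<in> W" unfolding W_def
  proof (intro CollectI conjI allI impI ballI)
    show "?g \<in> T" by (rule gT)
  next
    fix \<psi> :: "(nat list \<Rightarrow> 'k) \<Rightarrow> (nat list \<Rightarrow> 'k)" and v :: "nat list \<Rightarrow> 'k"
    assume \<psi>: "nc_endo \<psi>" and v: "v \<in> ncp"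
    obtain n where n: "p = Suc n" using p2 by (cases p) auto
    have e: "\<psi> ?g = nc_pow (\<psi> (nc_var 0)) p" unfolding n by (rule endo_pow[OF \<psi> var_ncp])
    have "\<psi> (nc_var 0) \<in> ncp" using \<psi> var_ncp unfolding nc_endo_def by blast
    then obtain A :: "'k R" where A: "\<psi> (nc_var 0) = lk A" "lk A [] = 0" using ncp_E by metis
    obtain V :: "'k R" where V: "v = lk V" "lk V [] = 0" using ncp_E[OF v] by metis
    have "nc_pow (lk A) p = lk (A ^ p)" unfolding n by (rule nc_pow_lk)
    then show "nc_diff (nc_mult (\<psi> ?g) v) (nc_mult v (\<psi> ?g)) \<in> T"
      unfolding e A V comm_lk using keyT[OF A(2) V(2)] by (simp only: comm_lk)
  qed
  have "T \<subseteq> W" unfolding T_def nc_tspace_gen_def using WT gW by blast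
  then have "u \<in> W" using assms(3) unfolding T_def by blast
  then have "nc_diff (nc_mult (id u) v) (nc_mult v (id u)) \<in> T"
    using endo_id assms(4) unfolding W_def by blast
  then show ?thesis unfolding T_def by simp
qed


end
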